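(* Let $I$ be a non-empty descent set with $s=s(I)$ and Naruse-Newton coefficients $(C_0,\ldots,C_s)$. Then $\frac{C_0}{0!}=\frac{C_1}{1!}=\cdots=\frac{C_s}{s!}$ if and only if $I$ is a shallow descent set.
   Context: Partitions are drawn as Young diagrams $\mathbb{D}(\lambda)$ in English notation; $c_{i,j}$ is the cell in row $i$, column $j$; $\lambda'$ is the conjugate partition ($\lambda'_j$ = number of cells in column $j$). The hook length $h_\lambda(c)$ is the number of cells of $\mathbb{D}(\lambda)$ weakly right of $c$ in its row or weakly below $c$ in its column (counting $c$ once). For $\mu\subseteq\lambda$, an excited diagram of $\lambda/\mu$ is a subset of $\mathbb{D}(\lambda)$ obtained from $\mathbb{D}(\mu)$ by repeatedly replacing a cell $c_{i,j}\in D$ by $c_{i+1,j+1}$, allowed iff $c_{i+1,j+1}\in\mathbb{D}(\lambda)$ and none of $c_{i,j+1},c_{i+1,j},c_{i+1,j+1}$ lies in $D$; $\mathbb{E}(\lambda/\mu)$ is their set. A ribbon with $n$ cells is read from its lower-left to its upper-right cell, each successive cell directly right of or directly above the previous; it corresponds to the set of $i\in\{1,\ldots,n-1\}$ with cell $i$ directly below cell $i+1$. A descent set is a non-empty finite set $I$ of positive integers; $\lambda^I$ is the unique partition with $\lambda^I_1=\lambda^I_2$ such that the cells $c_{i,j}\in\mathbb{D}(\lambda^I)$ with fewer than three of $c_{i,j+1},c_{i+1,j},c_{i+1,j+1}$ in $\mathbb{D}(\lambda^I)$ form a ribbon corresponding to $I$; this ribbon is $\mathbb{D}(\lambda^I)\setminus\mathbb{D}(\mu^I)$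 for a partition $\mu^I$. Let $s(I)=\lambda^I_1-1$. Naruse-Newton coefficients: every excited diagram of $\lambda^I/\mu^I$ meets row 1 in $\{c_{1,1},\ldots,c_{1,r}\}$, $0\le r\le s$; for $0\le j\le s(I)$, $C_j(I)=\sum_D\prod_{c\in D,\,c\notin\text{row }1}h_{\lambda^I}(c)$, summed over $D\in\mathbb{E}(\lambda^I/\mu^I)$ with exactly $s-j$ cells in row 1. $w(I)$ is the number of integers $j$ with $1\le j\le s(I)+1$ and $(\lambda^I)'_j=2$. $I$ is deep if $w(I)<s(I)$ and shallow otherwise. *)

theory Defs
  imports Complex_Main
begin

text \<open>Cells are pairs (row, column), 1-indexed, English notation (rows grow downward).
  A partition is a weakly decreasing list of positive naturals.\<close>

type_synonym cell = "nat \<times> nat"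

definition is_partition :: "nat list \<Rightarrow> bool" where
  "is_partition lam \<longleftrightarrow> sorted_wrt (\<ge>) lam \<and> 0 \<notin> set lam"

definition part :: "nat list \<Rightarrow> nat \<Rightarrow> nat" where
  "part lam i = (if 1 \<le> i \<and> i \<le> length lam then lam ! (i - 1) else 0)"

definition young :: "nat list \<Rightarrow> cell set" where
  "young lam = {(i, j). 1 \<le> i \<and> i \<le> length lam \<and> 1 \<le> j \<and> j \<le> lam ! (i - 1)}"

definition conj_part :: "nat list \<Rightarrow> nat \<Rightarrow> nat" where
  "conj_part lam j = card {i. (i, j) \<in> young lam}"

definition hook :: "nat list \<Rightarrow> cell \<Rightarrow> nat" where
  "hook lam c = card {j'. (fst c, j') \<in> young lam \<and> snd c \<le> j'}
              + card {i'. (i', snd c) \<in> young lam \<and> fst c < i'}"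

inductive_set excited :: "nat list \<Rightarrow> nat list \<Rightarrow> cell set set" for lam mu where
  base: "young mu \<in> excited lam mu"
| step: "D \<in> excited lam mu \<Longrightarrow> (i, j) \<in> D \<Longrightarrow> (i + 1, j + 1) \<in> young lam \<Longrightarrow>
         (i, j + 1) \<notin> D \<Longrightarrow> (i + 1, j) \<notin> D \<Longrightarrow> (i + 1, j + 1) \<notin> D \<Longrightarrow>
         insert (i + 1, j + 1) (D - {(i, j)}) \<in> excited lam mu"

definition ribbon_of :: "cell set \<Rightarrow> nat set \<Rightarrow> bool" where
  "ribbon_of R I \<longleftrightarrow> (\<exists>n (c :: nat \<Rightarrow> cell). 1 \<le> n \<and> R = c ` {1..n} \<and>
     (\<forall>k\<in>{1..n}. 1 \<le> fst (c k) \<and> 1 \<le> snd (c k)) \<and>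
     (\<forall>k\<in>{1..<n}.
        (c (Suc k) = (fst (c k), snd (c k) + 1) \<or> c k = (fst (c (Suc k)) + 1, snd (c (Suc k))))) \<and>
     I = {k \<in> {1..<n}. c k = (fst (c (Suc k)) + 1, snd (c (Suc k)))})"

definition outer :: "nat list \<Rightarrow> cell set" where
  "outer lam = {(i, j) \<in> young lam.
      \<not> ((i, j + 1) \<in> young lam \<and> (i + 1, j) \<in> young lam \<and> (i + 1, j + 1) \<in> young lam)}"

definition descent_set :: "nat set \<Rightarrow> bool" where
  "descent_set I \<longleftrightarrow> finite I \<and> I \<noteq> {} \<and> (\<forall>i\<in>I. 0 < i)"

definition lamI :: "nat set \<Rightarrow> nat list" where
  "lamI I = (THE lam. is_partition lam \<and> part lam 1 = part lam 2 \<and> ribbon_of (outer lam) I)"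

definition muI :: "nat set \<Rightarrow> nat list" where
  "muI I = (THE mu. is_partition mu \<and> young mu \<subseteq> young (lamI I) \<and>
                    young (lamI I) - young mu = outer (lamI I))"

definition sI :: "nat set \<Rightarrow> nat" where
  "sI I = part (lamI I) 1 - 1"

definition NN_coeff :: "nat set \<Rightarrow> nat \<Rightarrow> nat" where
  "NN_coeff I j = (\<Sum>D \<in> {D \<in> excited (lamI I) (muI I). card {c \<in> D. fst c = 1} = sI I - j}.
                     \<Prod>c \<in> {c \<in> D. fst c \<noteq> 1}. hook (lamI I) c)"

definition wI :: "nat set \<Rightarrow> nat" where
  "wI I = card {j. 1 \<le> j \<and> j \<le> sI I + 1 \<and> conj_part (lamI I) j = 2}"

definition deep :: "nat set \<Rightarrow> bool" where
  "deep I \<longleftrightarrow> wI I < sI I"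

definition shallow :: "nat set \<Rightarrow> bool" where
  "shallow I \<longleftrightarrow> \<not> deep I"

end

theory Submission
  imports Defs
begin

lemma young_part: "young L = {(i,j). 1 \<le> i \<and> 1 \<le> j \<and> j \<le> part L i}"
  unfolding young_def part_def by (auto split: if_splits)

lemma part_mono:
  assumes "is_partition L" "1 \<le> i" "i \<le> i'"
  shows "part L i' \<le> part L i"
proof (cases "i' \<le> length L")
  case True
  have s: "sorted_wrt (\<ge>) L" using assms(1) unfolding is_partition_def by simp
  have "L ! (i' - 1) \<le> L ! (i - 1)"
  proof (cases "i = i'")
    case False
    then have "i - 1 < i' - 1" "i' - 1 < length L" using assms True by auto
    then show ?thesis using s by (simp add: sorted_wrt_iff_nth_less)
  qed simp
  then show ?thesis using assms True unfolding part_def by auto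
next
  case False
  then show ?thesis unfolding part_def by auto
qed

lemma part_pos:
  assumes "is_partition L" "1 \<le> i" "i \<le> length L"
  shows "1 \<le> part L i"
proof -
  have "L ! (i-1) \<in> set L" using assms by auto
  then have "L ! (i-1) \<noteq> 0" using assms(1) unfolding is_partition_def by metis
  then show ?thesis using assms unfolding part_def by auto
qed

lemma young_down:
  assumes "is_partition L" "(i,j) \<in> young L" "1 \<le> i'" "i' \<le> i" "1 \<le> j'" "j' \<le> j"
  shows "(i',j') \<in> young L"
  using assms part_mono[OF assms(1), of i' i] unfolding young_part by auto

lemma young_finite: "finite (young L)"
proof -
  have "young L \<subseteq> {1..length L} \<times> {1..Max (set L)}"
    unfolding young_def by (auto intro!: order.trans[OF _ Max_ge])
  then show ?thesis by (rule finite_subset) auto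
qed

lemma young_col1: "is_partition L \<Longrightarrow> (i,1) \<in> young L \<longleftrightarrow> 1 \<le> i \<and> i \<le> length L"
  using part_pos[of L i] unfolding young_part by (auto simp: part_def split: if_splits)

lemma young_inj:
  assumes "is_partition A" "is_partition B" "young A = young B"
  shows "A = B"
proof -
  have len: "length A = length B"
  proof (rule ccontr)
    assume "length A \<noteq> length B"
    then consider "length A < length B" | "length B < length A" by linarith
    then show False
    proof cases
      case 1
      then have "(length B, 1) \<in> young B" "(length B, 1) \<notin> young A"
        using young_col1[OF assms(1)] young_col1[OF assms(2)] by auto
      then show False using assms(3) by simp
    next
      case 2
      then have "(length A, 1) \<in> young A" "(length A, 1) \<notin> young B"
        using young_col1[OF assms(1)] young_col1[OF assms(2)] by auto
      then show False using assms(3) by simp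
    qed
  qed
  have "part A i = part B i" for i
  proof (rule ccontr)
    assume ne: "part A i \<noteq> part B i"
    then have i: "1 \<le> i" "i \<le> length A" unfolding part_def using len by (auto split: if_splits)
    show False
    proof (cases "part A i < part B i")
      case True
      then have "(i, part B i) \<in> young B" "(i, part B i) \<notin> young A"
        unfolding young_part using i by auto
      then show False using assms(3) by simp
    next
      case False
      then have "(i, part A i) \<in> young A" "(i, part A i) \<notin> young B"
        unfolding young_part using i ne by auto
      then show False using assms(3) by simp
    qed
  qed
  then have "\<forall>k < length A. A ! k = B ! k"
    using len unfolding part_def by (metis Suc_leI add_diff_cancel_left' le_add1 plus_1_eq_Suc)
  then show ?thesis using len by (simp add: nth_equalityI)
qed

lemma young_pos: "(i,j) \<in> young L \<Longrightarrow> 1 \<le> i \<and> 1 \<le> j"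
  unfolding young_def by auto

lemma outer_char:
  assumes "is_partition L"
  shows "outer L = {(i,j) \<in> young L. (i+1,j+1) \<notin> young L}"
proof -
  have "(i,j+1) \<in> young L \<and> (i+1,j) \<in> young L" if "(i,j) \<in> young L" "(i+1,j+1) \<in> young L" for i j
    using young_down[OF assms that(2)] young_pos[OF that(1)] by auto
  then show ?thesis unfolding outer_def by blast
qed


definition steps :: "(nat \<Rightarrow> cell) \<Rightarrow> nat \<Rightarrow> bool" where
  "steps c n \<longleftrightarrow> (\<forall>k\<in>{1..<n}.
        (c (Suc k) = (fst (c k), snd (c k) + 1) \<or> c k = (fst (c (Suc k)) + 1, snd (c (Suc k)))))"

lemma ribbon_of_alt: "ribbon_of R I \<longleftrightarrow> (\<exists>n c. 1 \<le> n \<and> R = c ` {1..n} \<and>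
     (\<forall>k\<in>{1..n}. 1 \<le> fst (c k) \<and> 1 \<le> snd (c k)) \<and> steps c n \<and>
     I = {k \<in> {1..<n}. c k = (fst (c (Suc k)) + 1, snd (c (Suc k)))})"
  unfolding ribbon_of_def steps_def by blast

lemma steps_mono:
  assumes "steps c n" "1 \<le> k" "k \<le> k'" "k' \<le> n"
  shows "fst (c k') \<le> fst (c k) \<and> snd (c k) \<le> snd (c k')"
  using assms(3,4)
proof (induction k' rule: dec_induct)
  case base then show ?case by simp
next
  case (step m)
  then have "m \<in> {1..<n}" using assms(2) by auto
  then have "c (Suc m) = (fst (c m), snd (c m) + 1) \<or> c m = (fst (c (Suc m)) + 1, snd (c (Suc m)))"
    using assms(1) unfolding steps_def by blast
  then show ?case using step by auto
qed

lemma steps_formula: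
  assumes "steps c n" "I = {k \<in> {1..<n}. c k = (fst (c (Suc k)) + 1, snd (c (Suc k)))}"
    "1 \<le> k" "k \<le> n"
  shows "c k = (fst (c 1) - card (I \<inter> {1..<k}), snd (c 1) + card ({1..<k} - I))"
  using assms(3,4)
proof (induction k rule: dec_induct)
  case base then show ?case by simp
next
  case (step m)
  then have m: "m \<in> {1..<n}" using assms(3) by auto
  have "c (Suc m) = (fst (c m), snd (c m) + 1) \<or> c m = (fst (c (Suc m)) + 1, snd (c (Suc m)))"
    using assms(1) m unfolding steps_def by blast
  show ?case
  proof (cases "m \<in> I")
    case True
    then have cm: "c m = (fst (c (Suc m)) + 1, snd (c (Suc m)))" using assms(2) by auto
    have e1: "I \<inter> {1..<Suc m} = insert m (I \<inter> {1..<m})" using True step(1) by auto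
    have e2: "{1..<Suc m} - I = {1..<m} - I" using True by (auto simp: less_Suc_eq)
    have "card (I \<inter> {1..<Suc m}) = Suc (card (I \<inter> {1..<m}))" unfolding e1 by simp
    then show ?thesis using step cm e2 by (cases "c (Suc m)") auto
  next
    case False
    then have "c m \<noteq> (fst (c (Suc m)) + 1, snd (c (Suc m)))" using assms(2) m by auto
    then have cm: "c (Suc m) = (fst (c m), snd (c m) + 1)"
      using \<open>c (Suc m) = _ \<or> _\<close> by blast
    have e1: "I \<inter> {1..<Suc m} = I \<inter> {1..<m}" using False by (auto simp: less_Suc_eq)
    have e2: "{1..<Suc m} - I = insert m ({1..<m} - I)" using False step(1) by auto
    have "card ({1..<Suc m} - I) = Suc (card ({1..<m} - I))" unfolding e2 by simp
    then show ?thesis using step cm e1 by simp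
  qed
qed

lemma young_from_outer:
  assumes "is_partition L"
  shows "young L = {(i,j). 1 \<le> j \<and> (\<exists>j'. j \<le> j' \<and> (i,j') \<in> outer L)}"
proof -
  have "(i, part L i) \<in> outer L" if "(i,j) \<in> young L" for i j
  proof -
    have "1 \<le> i" "1 \<le> j" "j \<le> part L i" using that unfolding young_part by auto
    moreover have "part L (i+1) \<le> part L i" using part_mono[OF assms, of i "i+1"] \<open>1 \<le> i\<close> by simp
    ultimately show ?thesis unfolding outer_char[OF assms] young_part by auto
  qed
  moreover have "(i,j) \<in> young L" if "1 \<le> j" "j \<le> j'" "(i,j') \<in> outer L" for i j j'
  proof -
    have "(i,j') \<in> young L" using that(3) unfolding outer_def by auto
    then show ?thesis using young_down[OF assms, of i j' i j] young_pos that by auto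
  qed
  ultimately show ?thesis using young_pos unfolding young_part by auto
qed


lemma outer_sub: "outer L \<subseteq> young L" unfolding outer_def by auto

lemma ribbon_ends:
  assumes L: "is_partition L" "part L 1 = part L 2"
    and n: "1 \<le> n" and R: "outer L = c ` {1..n}" and st: "steps c n"
  shows "c 1 = (length L, 1)" "c n = (1, part L 1)" "2 \<le> n" "c (n-1) = (2, part L 1)"
    "2 \<le> length L" "1 \<le> part L 1"
proof -
  define l where "l = length L"
  define p where "p = part L 1"
  have c1o: "c 1 \<in> outer L" using R n by auto
  then have "c 1 \<in> young L" using outer_sub by auto
  then have "L \<noteq> []" unfolding young_def by auto
  then have l1: "1 \<le> l" unfolding l_def by (cases L) auto
  have p1: "1 \<le> p" using part_pos[OF L(1), of 1] l1 unfolding p_def l_def by auto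
  have l2: "2 \<le> l" using L(2) p1 unfolding p_def l_def part_def by (auto split: if_splits)
  have inY: "1 \<le> fst (c k) \<and> fst (c k) \<le> l \<and> 1 \<le> snd (c k) \<and> snd (c k) \<le> part L (fst (c k))
     \<and> snd (c k) \<le> p" if "k \<in> {1..n}" for k
  proof -
    have "c k \<in> outer L" using that R by auto
    then have "c k \<in> young L" using outer_sub by blast
    then have a: "1 \<le> fst (c k)" "1 \<le> snd (c k)" "snd (c k) \<le> part L (fst (c k))"
      unfolding young_part by auto
    then have "fst (c k) \<le> l" unfolding part_def l_def by (auto split: if_splits)
    moreover have "part L (fst (c k)) \<le> p" using part_mono[OF L(1), of 1 "fst (c k)"] a
      unfolding p_def by auto
    ultimately show ?thesis using a by auto
  qed
  have "(l,1) \<in> outer L"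
  proof -
    have "(l,1) \<in> young L" using young_col1[OF L(1)] l1 unfolding l_def by auto
    moreover have "(l+1,2) \<notin> young L"
    proof
      assume "(l+1,2) \<in> young L"
      then have "(l+1,1) \<in> young L" using young_down[OF L(1), of "l+1" 2 "l+1" 1] by auto
      then show False using young_col1[OF L(1)] unfolding l_def by auto
    qed
    ultimately show ?thesis unfolding outer_char[OF L(1)] by (simp add: numeral_2_eq_2)
  qed
  then obtain k0 where k0: "k0 \<in> {1..n}" "c k0 = (l,1)" using R by auto
  have "fst (c k0) \<le> fst (c 1) \<and> snd (c 1) \<le> snd (c k0)"
    using steps_mono[OF st, of 1 k0] k0 by auto
  then show c1: "c 1 = (length L, 1)" using inY[of 1] k0 n unfolding l_def
    by (cases "c 1") auto
  have "(1,p) \<in> outer L" unfolding outer_char[OF L(1)] young_part using p1 L(2)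
    unfolding p_def by (auto simp: numeral_2_eq_2)
  then obtain k1 where k1: "k1 \<in> {1..n}" "c k1 = (1,p)" using R by auto
  have "fst (c n) \<le> fst (c k1) \<and> snd (c k1) \<le> snd (c n)"
    using steps_mono[OF st, of k1 n] k1 by auto
  then show cn: "c n = (1, part L 1)" using inY[of n] k1 n unfolding p_def
    by (cases "c n") auto
  show n2: "2 \<le> n"
  proof (rule ccontr)
    assume "\<not> 2 \<le> n"
    then have "n = 1" using n by auto
    then show False using c1 cn l2 unfolding l_def by auto
  qed
  have "(2,p) \<in> outer L"
  proof -
    have "part L 3 \<le> part L 2" using part_mono[OF L(1), of 2 3] by auto
    then show ?thesis unfolding outer_char[OF L(1)] young_part using p1 L(2)
      unfolding p_def by (auto simp: numeral_2_eq_2 numeral_3_eq_3)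
  qed
  then obtain k2 where k2: "k2 \<in> {1..n}" "c k2 = (2,p)" using R by auto
  have "k2 \<noteq> n" using k2 cn by auto
  then have "k2 \<le> n - 1" using k2 by auto
  then have m: "snd (c k2) \<le> snd (c (n-1))" using steps_mono[OF st, of k2 "n-1"] k2 n2 by auto
  have "n - 1 \<in> {1..<n}" using n2 by auto
  then have "c (Suc (n-1)) = (fst (c (n-1)), snd (c (n-1)) + 1) \<or>
             c (n-1) = (fst (c (Suc (n-1))) + 1, snd (c (Suc (n-1))))"
    using st unfolding steps_def by blast
  moreover have "Suc (n-1) = n" using n2 by auto
  ultimately show "c (n-1) = (2, part L 1)" using m k2 cn unfolding p_def by auto
  show "2 \<le> length L" using l2 unfolding l_def .
  show "1 \<le> part L 1" using p1 unfolding p_def .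
qed

definition canon :: "nat set \<Rightarrow> nat \<Rightarrow> cell" where
  "canon I k = (card I + 1 - card (I \<inter> {1..<k}), 1 + card ({1..<k} - I))"

lemma ribbon_canon:
  assumes L: "is_partition L" "part L 1 = part L 2" and rib: "ribbon_of (outer L) I"
  shows "outer L = canon I ` {1..Max I + 1}" "length L = card I + 1" "finite I"
proof -
  obtain n c where n: "1 \<le> n" and R: "outer L = c ` {1..n}" and st: "steps c n"
    and I: "I = {k \<in> {1..<n}. c k = (fst (c (Suc k)) + 1, snd (c (Suc k)))}"
    using rib unfolding ribbon_of_alt by blast
  note e = ribbon_ends[OF L n R st]
  have "Suc (n-1) = n" using e(3) by auto
  then have "n - 1 \<in> I" unfolding I using e(2,3,4) by auto
  have Isub: "I \<subseteq> {1..<n}" unfolding I by auto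
  then show fin: "finite I" by (rule finite_subset) auto
  have mx: "Max I = n - 1"
    using \<open>n - 1 \<in> I\<close> Isub fin by (intro Max_eqI) (auto simp: subset_iff)
  have Iint: "I \<inter> {1..<n} = I" using Isub by auto
  have "c n = (fst (c 1) - card (I \<inter> {1..<n}), snd (c 1) + card ({1..<n} - I))"
    using steps_formula[OF st I, of n] n by auto
  then have "1 = length L - card I" using e(1,2) Iint by auto
  then show len: "length L = card I + 1" by auto
  have "c k = canon I k" if "k \<in> {1..n}" for k
    using steps_formula[OF st I, of k] that e(1) len unfolding canon_def by auto
  then have "c ` {1..n} = canon I ` {1..n}" by (intro image_cong) auto
  moreover have "{1..n} = {1..Max I + 1}" using mx e(3) by auto
  ultimately show "outer L = canon I ` {1..Max I + 1}" using R by simp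
qed

lemma lam_unique:
  assumes "is_partition A" "part A 1 = part A 2" "ribbon_of (outer A) I"
    "is_partition B" "part B 1 = part B 2" "ribbon_of (outer B) I"
  shows "A = B"
proof -
  have "outer A = outer B" using ribbon_canon(1)[OF assms(1-3)] ribbon_canon(1)[OF assms(4-6)] by simp
  then have "young A = young B" using young_from_outer[OF assms(1)] young_from_outer[OF assms(4)] by simp
  then show ?thesis using young_inj assms by blast
qed


lemma part_snoc: "part (L @ [x]) i = (if i = length L + 1 then x else part L i)"
  unfolding part_def by (auto simp: nth_append)

lemma part_mapSuc: "part (map Suc L) i = (if 1 \<le> i \<and> i \<le> length L then Suc (part L i) else 0)"
  unfolding part_def by auto

lemma lam_base: "\<exists>L. is_partition L \<and> part L 1 = part L 2 \<and> ribbon_of (outer L) {1}"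
proof -
  define L :: "nat list" where "L = [1,1]"
  have P: "is_partition L" unfolding L_def is_partition_def by auto
  have Y: "young L = {(1,1),(2,1)}" unfolding young_part L_def part_def
    by (auto simp: numeral_2_eq_2 le_Suc_eq split: if_splits)
  have O: "outer L = {(2,1),(1,1)}" unfolding outer_char[OF P] Y by auto
  define c :: "nat \<Rightarrow> cell" where "c = (\<lambda>k. if k = 1 then (2,1) else (1,1))"
  have e: "{1..2::nat} = {1,2}" "{1..<2::nat} = {1}" by auto
  have "ribbon_of (outer L) {1}" unfolding ribbon_of_alt steps_def
    apply (rule exI[of _ 2], rule exI[of _ c])
    unfolding O c_def e by (auto simp: numeral_2_eq_2)
  moreover have "part L 1 = part L 2" unfolding L_def part_def by auto
  ultimately show ?thesis using P by blast
qed

lemma lam_step1: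
  assumes L': "is_partition L'" "part L' 1 = part L' 2" "ribbon_of (outer L') I'"
    and I1: "1 \<in> I" and I0: "0 \<notin> I" and II: "\<And>k. 2 \<le> k \<Longrightarrow> k \<in> I \<longleftrightarrow> k - 1 \<in> I'"
  shows "\<exists>L. is_partition L \<and> part L 1 = part L 2 \<and> ribbon_of (outer L) I"
proof -
  obtain n' c' where n': "1 \<le> n'" and R': "outer L' = c' ` {1..n'}" and st': "steps c' n'"
    and pos': "\<forall>k\<in>{1..n'}. 1 \<le> fst (c' k) \<and> 1 \<le> snd (c' k)"
    and I': "I' = {k \<in> {1..<n'}. c' k = (fst (c' (Suc k)) + 1, snd (c' (Suc k)))}"
    using L'(3) unfolding ribbon_of_alt by blast
  note e = ribbon_ends[OF L'(1,2) n' R' st']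
  define l where "l = length L'"
  define L where "L = L' @ [1]"
  have P: "is_partition L"
  proof -
    have "\<forall>x\<in>set L'. 1 \<le> x" using L'(1) unfolding is_partition_def
      by (metis less_one not_le)
    then show ?thesis using L'(1) unfolding L_def is_partition_def
      by (auto simp: sorted_wrt_append)
  qed
  have pL: "part L i = (if i = l + 1 then 1 else part L' i)" for i
    unfolding L_def l_def by (rule part_snoc)
  have P12: "part L 1 = part L 2" using pL L'(2) e(5) unfolding l_def by auto
  have Y: "young L = insert (l+1,1) (young L')"
    unfolding young_part pL by (auto simp: part_def l_def split: if_splits)
  have nY: "(l+2,2) \<notin> young L'" unfolding young_part part_def l_def by auto
  have O: "outer L = insert (l+1,1) (outer L')"
    unfolding outer_char[OF P] outer_char[OF L'(1)] Y using nY
    by (auto simp: numeral_2_eq_2 dest: young_pos)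
  define c where "c = (\<lambda>k. if k = 1 then (l+1,1) else c' (k-1))"
  have img: "c ` {1..n'+1} = insert (l+1,1) (c' ` {1..n'})"
  proof
    show "c ` {1..n'+1} \<subseteq> insert (l+1,1) (c' ` {1..n'})"
    proof
      fix x assume "x \<in> c ` {1..n'+1}"
      then obtain k where k: "k \<in> {1..n'+1}" "x = c k" by auto
      show "x \<in> insert (l+1,1) (c' ` {1..n'})"
      proof (cases "k = 1")
        case False
        then have "k - 1 \<in> {1..n'}" using k by auto
        then show ?thesis using k False unfolding c_def by auto
      qed (use k in \<open>auto simp: c_def\<close>)
    qed
    show "insert (l+1,1) (c' ` {1..n'}) \<subseteq> c ` {1..n'+1}"
    proof
      fix x assume "x \<in> insert (l+1,1) (c' ` {1..n'})"
      then consider "x = c 1" | k where "k \<in> {1..n'}" "x = c' k" unfolding c_def by auto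
      then show "x \<in> c ` {1..n'+1}"
      proof cases
        case 1 then show ?thesis by auto
      next
        case 2
        then have "x = c (k+1)" unfolding c_def by auto
        then show ?thesis using 2 by auto
      qed
    qed
  qed
  have c1: "c 1 = (fst (c 2) + 1, snd (c 2))" unfolding c_def using e(1) unfolding l_def by auto
  have st: "steps c (n'+1)" unfolding steps_def
  proof
    fix k assume k: "k \<in> {1..<n'+1}"
    show "c (Suc k) = (fst (c k), snd (c k) + 1) \<or> c k = (fst (c (Suc k)) + 1, snd (c (Suc k)))"
    proof (cases "k = 1")
      case True then show ?thesis using c1 by (simp add: numeral_2_eq_2)
    next
      case False
      then have "k - 1 \<in> {1..<n'}" "Suc (k-1) = k" using k by auto
      then show ?thesis using st' False unfolding steps_def c_def by force
    qed
  qed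
  have "I = {k \<in> {1..<n'+1}. c k = (fst (c (Suc k)) + 1, snd (c (Suc k)))}"
  proof (rule set_eqI)
    fix k
    show "k \<in> I \<longleftrightarrow> k \<in> {k \<in> {1..<n'+1}. c k = (fst (c (Suc k)) + 1, snd (c (Suc k)))}"
    proof (cases "k = 1")
      case True then show ?thesis using I1 c1 n' by (simp add: numeral_2_eq_2)
    next
      case False
      show ?thesis
      proof (cases "k = 0")
        case True
        then have "k \<notin> I" using I0 by simp
        then show ?thesis using True by auto
      next
        case False
        then have k2: "2 \<le> k" using \<open>k \<noteq> 1\<close> by auto
        have "c k = c' (k-1)" "c (Suc k) = c' (Suc (k-1))" using k2 unfolding c_def by auto
        then show ?thesis unfolding II[OF k2] I' using k2 by auto
      qed
    qed
  qed
  moreover have pos: "\<forall>k\<in>{1..n'+1}. 1 \<le> fst (c k) \<and> 1 \<le> snd (c k)"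
  proof
    fix k assume k: "k \<in> {1..n'+1}"
    show "1 \<le> fst (c k) \<and> 1 \<le> snd (c k)"
    proof (cases "k = 1")
      case False
      then have "k - 1 \<in> {1..n'}" using k by auto
      then show ?thesis using pos' False unfolding c_def by auto
    qed (auto simp: c_def)
  qed
  ultimately have "ribbon_of (outer L) I"
    unfolding ribbon_of_alt O R' img[symmetric] using st
    by (intro exI[of _ "n'+1"] exI[of _ c]) auto
  then show ?thesis using P P12 by blast
qed


lemma part_beyond: "length L < i \<Longrightarrow> part L i = 0"
  unfolding part_def by auto

lemma lam_step2:
  assumes L': "is_partition L'" "part L' 1 = part L' 2" "ribbon_of (outer L') I'"
    and I1: "1 \<notin> I" and I0: "0 \<notin> I" and II: "\<And>k. 2 \<le> k \<Longrightarrow> k \<in> I \<longleftrightarrow> k - 1 \<in> I'"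
  shows "\<exists>L. is_partition L \<and> part L 1 = part L 2 \<and> ribbon_of (outer L) I"
proof -
  obtain n' c' where n': "1 \<le> n'" and R': "outer L' = c' ` {1..n'}" and st': "steps c' n'"
    and pos': "\<forall>k\<in>{1..n'}. 1 \<le> fst (c' k) \<and> 1 \<le> snd (c' k)"
    and I': "I' = {k \<in> {1..<n'}. c' k = (fst (c' (Suc k)) + 1, snd (c' (Suc k)))}"
    using L'(3) unfolding ribbon_of_alt by blast
  note e = ribbon_ends[OF L'(1,2) n' R' st']
  define l where "l = length L'"
  define L where "L = map Suc L'"
  have P: "is_partition L" using L'(1) unfolding L_def is_partition_def
    by (auto simp: sorted_wrt_map)
  have pL: "part L i = (if 1 \<le> i \<and> i \<le> l then Suc (part L' i) else 0)" for i
    unfolding L_def l_def by (rule part_mapSuc)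
  have P12: "part L 1 = part L 2" using pL L'(2) e(5) unfolding l_def by auto
  have pb: "part L' i = 0" if "l < i" for i using part_beyond that unfolding l_def by auto
  have pp: "1 \<le> part L' i" if "1 \<le> i" "i \<le> l" for i using part_pos[OF L'(1)] that unfolding l_def by auto
  define sh where "sh = (\<lambda>(i::nat,j::nat). (i, j+1))"
  have O: "outer L = insert (l,1) (sh ` outer L')"
  proof (rule set_eqI)
    fix x :: cell
    obtain i j where x: "x = (i,j)" by fastforce
    show "x \<in> outer L \<longleftrightarrow> x \<in> insert (l,1) (sh ` outer L')"
    proof (cases "j = 1")
      case True
      have "(i,0) \<notin> outer L'" using outer_sub[of L'] young_pos[of i 0 L'] by auto
      then have "(i,1) \<notin> sh ` outer L'" unfolding sh_def by auto
      moreover have "(i,1) \<in> outer L \<longleftrightarrow> i = l"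
        unfolding outer_char[OF P] young_part pL using pp[of "i+1"] e(5) unfolding l_def by auto
      ultimately show ?thesis using x True by auto
    next
      case False
      have "(i,0) \<notin> outer L'" using outer_sub[of L'] young_pos[of i 0 L'] by auto
      then have "(i,j) \<in> sh ` outer L' \<longleftrightarrow> (i,j-1) \<in> outer L'"
        using False unfolding sh_def by (cases j) (force simp: image_iff)+
      moreover have "(i,j) \<in> outer L \<longleftrightarrow> (i,j-1) \<in> outer L'"
        unfolding outer_char[OF P] outer_char[OF L'(1)] young_part pL
        using False pb[of i] pb[of "i+1"] by (auto simp: not_le)
      ultimately show ?thesis using x False by auto
    qed
  qed
  define c where "c = (\<lambda>k. if k = 1 then (l,1) else (fst (c' (k-1)), snd (c' (k-1)) + 1))"
  have img: "c ` {1..n'+1} = insert (l,1) (sh ` c' ` {1..n'})"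
  proof
    show "c ` {1..n'+1} \<subseteq> insert (l,1) (sh ` c' ` {1..n'})"
    proof
      fix x assume "x \<in> c ` {1..n'+1}"
      then obtain k where k: "k \<in> {1..n'+1}" "x = c k" by auto
      show "x \<in> insert (l,1) (sh ` c' ` {1..n'})"
      proof (cases "k = 1")
        case False
        then have "k - 1 \<in> {1..n'}" using k by auto
        then show ?thesis using k False unfolding c_def sh_def by (auto simp: case_prod_beta)
      qed (use k in \<open>auto simp: c_def\<close>)
    qed
    show "insert (l,1) (sh ` c' ` {1..n'}) \<subseteq> c ` {1..n'+1}"
    proof
      fix x assume "x \<in> insert (l,1) (sh ` c' ` {1..n'})"
      then consider "x = c 1" | k where "k \<in> {1..n'}" "x = sh (c' k)" unfolding c_def by auto
      then show "x \<in> c ` {1..n'+1}"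
      proof cases
        case 1 then show ?thesis by auto
      next
        case 2
        then have "x = c (k+1)" unfolding c_def sh_def by (auto simp: case_prod_beta)
        then show ?thesis using 2 by auto
      qed
    qed
  qed
  have c2: "c 2 = (l, 2)" unfolding c_def using e(1) unfolding l_def by (simp add: numeral_2_eq_2)
  have st: "steps c (n'+1)" unfolding steps_def
  proof
    fix k assume k: "k \<in> {1..<n'+1}"
    show "c (Suc k) = (fst (c k), snd (c k) + 1) \<or> c k = (fst (c (Suc k)) + 1, snd (c (Suc k)))"
    proof (cases "k = 1")
      case True then show ?thesis using c2 by (simp add: numeral_2_eq_2 c_def)
    next
      case False
      then have "k - 1 \<in> {1..<n'}" "Suc (k-1) = k" using k by auto
      then have "c' k = (fst (c' (k-1)), snd (c' (k-1)) + 1) \<or> c' (k-1) = (fst (c' k) + 1, snd (c' k))"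
        using st' unfolding steps_def by force
      then show ?thesis using False k unfolding c_def by auto
    qed
  qed
  have "I = {k \<in> {1..<n'+1}. c k = (fst (c (Suc k)) + 1, snd (c (Suc k)))}"
  proof (rule set_eqI)
    fix k
    show "k \<in> I \<longleftrightarrow> k \<in> {k \<in> {1..<n'+1}. c k = (fst (c (Suc k)) + 1, snd (c (Suc k)))}"
    proof (cases "k = 1")
      case True then show ?thesis using I1 c2 by (simp add: numeral_2_eq_2 c_def)
    next
      case False
      show ?thesis
      proof (cases "k = 0")
        case True
        then have "k \<notin> I" using I0 by simp
        then show ?thesis using True by auto
      next
        case False
        then have k2: "2 \<le> k" using \<open>k \<noteq> 1\<close> by auto
        have "c k = sh (c' (k-1))" "c (Suc k) = sh (c' (Suc (k-1)))" using k2 unfolding c_def sh_def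
          by (auto simp: case_prod_beta)
        then show ?thesis unfolding II[OF k2] I' using k2 by (auto simp: sh_def case_prod_beta prod_eq_iff)
      qed
    qed
  qed
  moreover have pos: "\<forall>k\<in>{1..n'+1}. 1 \<le> fst (c k) \<and> 1 \<le> snd (c k)"
  proof
    fix k assume k: "k \<in> {1..n'+1}"
    show "1 \<le> fst (c k) \<and> 1 \<le> snd (c k)"
    proof (cases "k = 1")
      case False
      then have "k - 1 \<in> {1..n'}" using k by auto
      then show ?thesis using pos' False unfolding c_def by auto
    qed (use e(5) in \<open>auto simp: c_def l_def\<close>)
  qed
  ultimately have "ribbon_of (outer L) I"
    unfolding ribbon_of_alt O R' img[symmetric] using st
    by (intro exI[of _ "n'+1"] exI[of _ c]) auto
  then show ?thesis using P P12 by blast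
qed


lemma lam_exists:
  assumes "finite I" "I \<noteq> {}" "\<forall>i\<in>I. 0 < i"
  shows "\<exists>L. is_partition L \<and> part L 1 = part L 2 \<and> ribbon_of (outer L) I"
  using assms
proof (induction "Max I" arbitrary: I rule: less_induct)
  case less
  note fin = less.prems(1) and ne = less.prems(2) and pos = less.prems(3)
  show ?case
  proof (cases "I = {1}")
    case True then show ?thesis using lam_base by simp
  next
    case False
    have I0: "0 \<notin> I" using pos by auto
    have lt: "k - 1 < Max I" if "k \<in> I" for k
    proof -
      have "k \<le> Max I" using Max_ge[OF fin that] .
      then show ?thesis using pos that by auto
    qed
    show ?thesis
    proof (cases "1 \<in> I")
      case True
      define I' where "I' = (\<lambda>k. k - 1) ` (I - {1})"
      have ne': "I - {1} \<noteq> {}" using False ne True by auto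
      have fin': "finite I'" unfolding I'_def using fin by auto
      have ne'': "I' \<noteq> {}" unfolding I'_def using ne' by auto
      have pos': "\<forall>i\<in>I'. 0 < i" unfolding I'_def using pos by fastforce
      have "Max I' \<in> I'" using fin' ne'' by (rule Max_in)
      then have "Max I' < Max I" unfolding I'_def using lt by auto
      then obtain L' where L': "is_partition L'" "part L' 1 = part L' 2" "ribbon_of (outer L') I'"
        using less.hyps[OF _ fin' ne'' pos'] by blast
      have II: "k \<in> I \<longleftrightarrow> k - 1 \<in> I'" if "2 \<le> k" for k
      proof
        assume "k \<in> I" then show "k - 1 \<in> I'" unfolding I'_def using that by auto
      next
        assume "k - 1 \<in> I'"
        then obtain j where j: "j \<in> I" "j \<noteq> 1" "k - 1 = j - 1" unfolding I'_def by auto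
        then have "j \<ge> 2" using pos by fastforce
        then have "k = j" using j(3) that by linarith
        then show "k \<in> I" using j by simp
      qed
      show ?thesis by (rule lam_step1[OF L' True I0 II])
    next
      case F1: False
      define I' where "I' = (\<lambda>k. k - 1) ` I"
      have fin': "finite I'" unfolding I'_def using fin by auto
      have ne'': "I' \<noteq> {}" unfolding I'_def using ne by auto
      have pos': "\<forall>i\<in>I'. 0 < i"
      proof
        fix i assume "i \<in> I'"
        then obtain k where k: "k \<in> I" "i = k - 1" unfolding I'_def by auto
        then have "k \<noteq> 1" "k \<noteq> 0" using F1 pos by auto
        then show "0 < i" using k by linarith
      qed
      have "Max I' \<in> I'" using fin' ne'' by (rule Max_in)
      then have "Max I' < Max I" unfolding I'_def using lt by auto
      then obtain L' where L': "is_partition L'" "part L' 1 = part L' 2" "ribbon_of (outer L') I'"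
        using less.hyps[OF _ fin' ne'' pos'] by blast
      have II: "k \<in> I \<longleftrightarrow> k - 1 \<in> I'" if "2 \<le> k" for k
      proof
        assume "k \<in> I" then show "k - 1 \<in> I'" unfolding I'_def using that by auto
      next
        assume "k - 1 \<in> I'"
        then obtain j where j: "j \<in> I" "k - 1 = j - 1" unfolding I'_def by auto
        then have "j \<noteq> 1" "j \<noteq> 0" using F1 pos by auto
        then have "j \<ge> 2" by linarith
        then have "k = j" using j(2) that by linarith
        then show "k \<in> I" using j by simp
      qed
      show ?thesis by (rule lam_step2[OF L' F1 I0 II])
    qed
  qed
qed

lemma lamI_props:
  assumes "descent_set I"
  shows "is_partition (lamI I) \<and> part (lamI I) 1 = part (lamI I) 2 \<and> ribbon_of (outer (lamI I)) I"
proof -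
  have "\<exists>!L. is_partition L \<and> part L 1 = part L 2 \<and> ribbon_of (outer L) I"
    using lam_exists[of I] assms lam_unique[of _ I] unfolding descent_set_def by blast
  then show ?thesis unfolding lamI_def by (rule theI')
qed

definition Mset :: "nat list \<Rightarrow> cell set" where
  "Mset L = {(i,j). 1 \<le> i \<and> 1 \<le> j \<and> (i+1,j+1) \<in> young L}"

lemma mu_exists:
  assumes P: "is_partition L"
  shows "\<exists>mu. is_partition mu \<and> young mu = Mset L"
proof -
  define tw where "tw = takeWhile (\<lambda>x. 2 \<le> x) (tl L)"
  define mu where "mu = map (\<lambda>x. x - 1) tw"
  have stl: "sorted_wrt (\<ge>) (tl L)" using P unfolding is_partition_def by (cases L) auto
  have stw: "sorted_wrt (\<ge>) tw" unfolding tw_def using stl by simp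
  have Pmu: "is_partition mu" unfolding is_partition_def mu_def
  proof
    have "sorted_wrt (\<lambda>x y. y - 1 \<le> x - (1::nat)) tw"
      by (rule sorted_wrt_mono_rel[OF _ stw]) (simp add: diff_le_mono)
    then show "sorted_wrt (\<ge>) (map (\<lambda>x. x - 1) tw)" by (simp add: sorted_wrt_map)
    show "0 \<notin> set (map (\<lambda>x. x - 1) tw)" unfolding tw_def by (auto dest: set_takeWhileD)
  qed
  have tlnth: "tl L ! k = L ! (k+1)" if "k < length (tl L)" for k
    using that by (cases L) auto
  have pm: "part mu i = part L (i+1) - 1" if "1 \<le> i" for i
  proof (cases "i \<le> length tw")
    case True
    then have "i - 1 < length tw" using that by auto
    moreover have "length tw \<le> length (tl L)" unfolding tw_def by (rule length_takeWhile_le)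
    ultimately have "part mu i = tl L ! (i-1) - 1" "tl L ! (i-1) = L ! i" "i + 1 \<le> length L"
      unfolding mu_def part_def tw_def using that tlnth[of "i-1"] by (auto simp: takeWhile_nth)
    then show ?thesis unfolding part_def using that by auto
  next
    case False
    then have pmu: "part mu i = 0" unfolding part_def mu_def by auto
    have "part L (i+1) \<le> 1"
    proof (cases "length tw < length (tl L)")
      case True
      have "\<not> 2 \<le> tl L ! length tw" using nth_length_takeWhile[of "\<lambda>x. 2 \<le> x" "tl L"] True
        unfolding tw_def by auto
      then have "part L (length tw + 2) \<le> 1" using tlnth[of "length tw"] True
        unfolding part_def by auto
      moreover have "part L (i+1) \<le> part L (length tw + 2)"
        using part_mono[OF P, of "length tw + 2" "i+1"] False by auto
      ultimately show ?thesis by auto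
    next
      case False
      then have "length tw = length (tl L)" unfolding tw_def using length_takeWhile_le
        by (metis le_neq_implies_less)
      then have "length L < i + 1" using \<open>\<not> i \<le> length tw\<close> by auto
      then show ?thesis using part_beyond by auto
    qed
    then show ?thesis using pmu by auto
  qed
  have "young mu = Mset L" unfolding Mset_def young_part using pm by auto
  then show ?thesis using Pmu by blast
qed

lemma Mset_sub:
  assumes P: "is_partition L" shows "Mset L \<subseteq> young L"
proof
  fix x assume "x \<in> Mset L"
  then obtain a b where "x = (a,b)" "1 \<le> a" "1 \<le> b" "(a+1,b+1) \<in> young L"
    unfolding Mset_def by auto
  then show "x \<in> young L" using young_down[OF P, of "a+1" "b+1" a b] by auto
qed

lemma muI_young:
  assumes "descent_set I"
  shows "young (muI I) = Mset (lamI I)"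
proof -
  define L where "L = lamI I"
  have P: "is_partition L" using lamI_props[OF assms] unfolding L_def by auto
  have eq: "young L - outer L = Mset L"
  proof
    show "young L - outer L \<subseteq> Mset L"
    proof
      fix x assume x: "x \<in> young L - outer L"
      obtain a b where ab: "x = (a,b)" by fastforce
      have xy: "(a,b) \<in> young L" "(a,b) \<notin> outer L" using x ab by auto
      then have "1 \<le> a" "1 \<le> b" using young_pos[of a b L] by auto
      moreover have "(a+1,b+1) \<in> young L" using xy unfolding outer_char[OF P] by blast
      ultimately show "x \<in> Mset L" using ab unfolding Mset_def by blast
    qed
    show "Mset L \<subseteq> young L - outer L"
    proof
      fix x assume x: "x \<in> Mset L"
      then have "x \<in> young L" using Mset_sub[OF P] by blast
      moreover obtain a b where "x = (a,b)" "(a+1,b+1) \<in> young L" using x unfolding Mset_def by blast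
      ultimately show "x \<in> young L - outer L" unfolding outer_char[OF P] by blast
    qed
  qed
  have "\<exists>!mu. is_partition mu \<and> young mu \<subseteq> young L \<and> young L - young mu = outer L"
  proof -
    obtain mu where mu: "is_partition mu" "young mu = Mset L" using mu_exists[OF P] by blast
    have "young L - Mset L = outer L" using eq outer_sub[of L] by blast
    then have ex: "is_partition mu \<and> young mu \<subseteq> young L \<and> young L - young mu = outer L"
      using mu Mset_sub[OF P] by simp
    have uq: "m = mu" if "is_partition m \<and> young m \<subseteq> young L \<and> young L - young m = outer L" for m
    proof -
      have "young m = Mset L" using that eq by blast
      then have "young m = young mu" using mu by simp
      then show ?thesis using young_inj[of m mu] that mu(1) by blast
    qed
    show ?thesis
    proof (rule ex1I[of _ mu])
      show "is_partition mu \<and> young mu \<subseteq> young L \<and> young L - young mu = outer L" by (rule ex)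
    next
      fix m assume "is_partition m \<and> young m \<subseteq> young L \<and> young L - young m = outer L"
      then show "m = mu" by (rule uq)
    qed
  qed
  then have "is_partition (muI I) \<and> young (muI I) \<subseteq> young L \<and> young L - young (muI I) = outer L"
    unfolding muI_def L_def[symmetric] by (rule theI')
  then have "young (muI I) = young L - outer L" by blast
  then show ?thesis using eq unfolding L_def[symmetric] by simp
qed


definition shiftc :: "cell \<Rightarrow> cell" where "shiftc c = (fst c + 1, snd c + 1)"

lemma Mset_fin: "finite (Mset L)"
proof -
  have "Mset L \<subseteq> (\<lambda>c. (fst c - 1, snd c - 1)) ` young L"
  proof
    fix x assume "x \<in> Mset L"
    then obtain a b where "x = (a,b)" "(a+1,b+1) \<in> young L" unfolding Mset_def by auto
    then show "x \<in> (\<lambda>c. (fst c - 1, snd c - 1)) ` young L" by (auto intro: image_eqI[of _ _ "(a+1,b+1)"])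
  qed
  then show ?thesis by (rule finite_surj[OF young_finite])
qed

lemma exc_inv:
  assumes D: "D \<in> excited L mu" and mu: "young mu = Mset L" and P: "is_partition L"
  shows "D \<subseteq> young L \<and> finite D \<and> card D = card (Mset L) \<and>
         (\<forall>i. 1 \<le> i \<longrightarrow> (i+1,1) \<in> D \<longrightarrow> (i,1) \<in> D)"
  using D
proof (induction rule: excited.induct)
  case base
  have "(i,1) \<in> Mset L" if "1 \<le> i" "(i+1,1) \<in> Mset L" for i
    using that young_down[OF P, of "i+2" 2 "i+1" 2] unfolding Mset_def by (auto simp: numeral_2_eq_2)
  then show ?case using Mset_sub[OF P] Mset_fin mu by auto
next
  case (step D i j)
  have j1: "1 \<le> j" using step.IH step.hyps(2) young_pos by blast
  have fD: "finite D" using step.IH by blast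
  have "card (insert (i + 1, j + 1) (D - {(i, j)})) = card D"
  proof -
    have "(i+1,j+1) \<notin> D - {(i,j)}" using step.hyps(6) by auto
    then have "card (insert (i + 1, j + 1) (D - {(i, j)})) = Suc (card (D - {(i,j)}))"
      using fD by simp
    moreover have "card (D - {(i,j)}) = card D - 1" using step.hyps(2) fD by simp
    moreover have "card D > 0" using step.hyps(2) fD card_gt_0_iff by blast
    ultimately show ?thesis by simp
  qed
  moreover have "(x,1) \<in> insert (i + 1, j + 1) (D - {(i, j)})"
    if "1 \<le> x" "(x+1,1) \<in> insert (i + 1, j + 1) (D - {(i, j)})" for x
  proof -
    have "(x+1,1) \<in> D" using that j1 by auto
    then have "(x,1) \<in> D" using step.IH that(1) by blast
    moreover have "(x,1) \<noteq> (i,j)" using step.hyps(5) \<open>(x+1,1) \<in> D\<close> by auto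
    ultimately show ?thesis by auto
  qed
  ultimately show ?case using step by auto
qed


definition lexl :: "cell \<Rightarrow> cell \<Rightarrow> bool" where
  "lexl y x \<longleftrightarrow> fst y < fst x \<or> (fst y = fst x \<and> snd y < snd x)"

lemma lex_min:
  assumes "finite P" "P \<noteq> {}"
  shows "\<exists>c\<in>P. \<forall>y\<in>P. \<not> lexl y c"
  using assms
proof (induction P rule: finite_ne_induct)
  case (singleton x) then show ?case by (auto simp: lexl_def)
next
  case (insert x F)
  then obtain c where c: "c \<in> F" "\<forall>y\<in>F. \<not> lexl y c" by blast
  show ?case
  proof (cases "lexl x c")
    case True
    have "\<forall>y\<in>insert x F. \<not> lexl y x"
    proof
      fix y assume "y \<in> insert x F"
      then show "\<not> lexl y x" using c True unfolding lexl_def by auto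
    qed
    then show ?thesis by blast
  next
    case False
    then show ?thesis using c by blast
  qed
qed

definition upc :: "cell set \<Rightarrow> cell set \<Rightarrow> bool" where
  "upc Q P \<longleftrightarrow> (\<forall>x\<in>Q. \<forall>y\<in>P. lexl y x \<longrightarrow> x \<in> P)"

lemma lexl_simp[simp]: "lexl (a,b) (c,d) \<longleftrightarrow> a < c \<or> (a = c \<and> b < d)"
  unfolding lexl_def by simp

lemma shiftc_simp[simp]: "shiftc (a,b) = (a+1,b+1)"
  unfolding shiftc_def by simp

lemma reach:
  assumes P: "is_partition L" and mu: "young mu = Mset L" and Q: "Q \<subseteq> Mset L"
    and Qc: "\<And>i j. (i,j) \<in> Q \<Longrightarrow> ((i,j+1) \<in> Mset L \<longrightarrow> (i,j+1) \<in> Q) \<and>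
               ((i+1,j) \<in> Mset L \<longrightarrow> (i+1,j) \<in> Q) \<and> ((i+1,j+1) \<in> Mset L \<longrightarrow> (i+1,j+1) \<in> Q)"
  shows "\<forall>Pp. Pp \<subseteq> Q \<and> card Pp = n \<and> upc Q Pp \<longrightarrow> (Mset L - Pp) \<union> shiftc ` Pp \<in> excited L mu"
proof (induction n)
  case 0
  show ?case
  proof (intro allI impI)
    fix Pp assume h: "Pp \<subseteq> Q \<and> card Pp = 0 \<and> upc Q Pp"
    have "finite Pp" using h Q finite_subset[of Pp "Mset L"] Mset_fin[of L] by blast
    then have "Pp = {}" using h by simp
    then show "(Mset L - Pp) \<union> shiftc ` Pp \<in> excited L mu"
      using excited.base[of mu L] mu by simp
  qed
next
  case (Suc n)
  show ?case
  proof (intro allI impI)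
    fix Pp assume h: "Pp \<subseteq> Q \<and> card Pp = Suc n \<and> upc Q Pp"
    have fin: "finite Pp" using h Q finite_subset[of Pp "Mset L"] Mset_fin[of L] by blast
    then have ne: "Pp \<noteq> {}" using h by auto
    obtain c where c: "c \<in> Pp" "\<forall>y\<in>Pp. \<not> lexl y c" using lex_min[OF fin ne] by blast
    obtain i j where cij: "c = (i,j)" by fastforce
    have cmin: "\<not> (a < i \<or> (a = i \<and> b < j))" if "(a,b) \<in> Pp" for a b
      using c(2) that cij by fastforce
    define Pp' where "Pp' = Pp - {c}"
    have PP: "Pp = insert c Pp'" "c \<notin> Pp'" using c unfolding Pp'_def by auto
    have up': "upc Q Pp'" unfolding upc_def
    proof (intro ballI impI)
      fix x y assume xy: "x \<in> Q" "y \<in> Pp'" "lexl y x"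
      then have "x \<in> Pp" using h PP unfolding upc_def by blast
      moreover have "x \<noteq> c"
      proof
        assume "x = c"
        then have "lexl y c" "y \<in> Pp" using xy PP by auto
        then show False using c by blast
      qed
      ultimately show "x \<in> Pp'" using PP by blast
    qed
    have "Pp' \<subseteq> Q" using h PP by blast
    moreover have "card Pp' = n" using h c fin unfolding Pp'_def by simp
    ultimately have S': "(Mset L - Pp') \<union> shiftc ` Pp' \<in> excited L mu" using Suc.IH up' by blast
    define S' where "S' = (Mset L - Pp') \<union> shiftc ` Pp'"
    have cQ: "c \<in> Q" using c h by blast
    then have cM: "(i,j) \<in> Mset L" using Q cij by blast
    have cS: "(i,j) \<in> S'" using cM cij PP unfolding S'_def by blast
    have cY: "(i+1,j+1) \<in> young L" using cM unfolding Mset_def by blast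
    have inP: "x \<in> Pp'" if "x \<in> Q" "lexl c x" for x
    proof -
      have "x \<in> Pp" using h that c(1) unfolding upc_def by blast
      moreover have "x \<noteq> c" using that unfolding lexl_def by auto
      ultimately show ?thesis using PP by blast
    qed
    have Qc': "((i,j+1) \<in> Mset L \<longrightarrow> (i,j+1) \<in> Q) \<and>
               ((i+1,j) \<in> Mset L \<longrightarrow> (i+1,j) \<in> Q) \<and> ((i+1,j+1) \<in> Mset L \<longrightarrow> (i+1,j+1) \<in> Q)"
      using Qc cQ cij by blast
    have notM: "x \<notin> Mset L - Pp'" if "x \<in> Mset L \<longrightarrow> x \<in> Q" "lexl c x" for x
      using inP that by blast
    have n1: "(i,j+1) \<notin> S'"
    proof
      assume a: "(i,j+1) \<in> S'"
      have "(i,j+1) \<notin> Mset L - Pp'" using notM[of "(i,j+1)"] Qc' cij by simp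
      then have "(i,j+1) \<in> shiftc ` Pp'" using a unfolding S'_def by blast
      then obtain y where y: "y \<in> Pp'" "(i,j+1) = shiftc y" by blast
      obtain a' b' where ab: "y = (a',b')" by fastforce
      have "(a',b') \<in> Pp" using y ab PP by blast
      then show False using cmin[of a' b'] y ab by simp
    qed
    have n2: "(i+1,j) \<notin> S'"
    proof
      assume a: "(i+1,j) \<in> S'"
      have "(i+1,j) \<notin> Mset L - Pp'" using notM[of "(i+1,j)"] Qc' cij by simp
      then have "(i+1,j) \<in> shiftc ` Pp'" using a unfolding S'_def by blast
      then obtain y where y: "y \<in> Pp'" "(i+1,j) = shiftc y" by blast
      obtain a' b' where ab: "y = (a',b')" by fastforce
      have "(a',b') \<in> Pp" using y ab PP by blast
      then show False using cmin[of a' b'] y ab by simp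
    qed
    have n3: "(i+1,j+1) \<notin> S'"
    proof
      assume a: "(i+1,j+1) \<in> S'"
      have "(i+1,j+1) \<notin> Mset L - Pp'" using notM[of "(i+1,j+1)"] Qc' cij by simp
      then have "(i+1,j+1) \<in> shiftc ` Pp'" using a unfolding S'_def by blast
      then obtain y where y: "y \<in> Pp'" "(i+1,j+1) = shiftc y" by blast
      obtain a' b' where ab: "y = (a',b')" by fastforce
      then have "y = c" using y cij by simp
      then show False using y PP by blast
    qed
    have st: "insert (i+1,j+1) (S' - {(i,j)}) \<in> excited L mu"
      using excited.step[OF S'[folded S'_def] cS cY n1 n2 n3] by simp
    have cns: "c \<notin> shiftc ` Pp'"
    proof
      assume "c \<in> shiftc ` Pp'"
      then obtain y where y: "y \<in> Pp'" "c = shiftc y" by blast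
      obtain a' b' where ab: "y = (a',b')" by fastforce
      have "(a',b') \<in> Pp" using y ab PP by blast
      then show False using cmin[of a' b'] y ab cij by simp
    qed
    have "insert (i+1,j+1) (S' - {(i,j)}) = (Mset L - Pp) \<union> shiftc ` Pp"
    proof -
      have e1: "(Mset L - Pp) \<union> shiftc ` Pp = insert (shiftc c) ((Mset L - Pp' - {c}) \<union> shiftc ` Pp')"
      proof -
        have x1: "Mset L - Pp = Mset L - Pp' - {c}" using PP(1) by blast
        have x2: "shiftc ` Pp = insert (shiftc c) (shiftc ` Pp')" using PP(1) by (simp only: image_insert)
        show ?thesis unfolding x1 x2 by simp
      qed
      have "shiftc ` Pp' - {c} = shiftc ` Pp'" using cns by blast
      then have e2: "S' - {c} = (Mset L - Pp' - {c}) \<union> shiftc ` Pp'" unfolding S'_def Un_Diff by simp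
      show ?thesis unfolding e1 e2[unfolded cij] using cij by simp
    qed
    then show "(Mset L - Pp) \<union> shiftc ` Pp \<in> excited L mu" using st by simp
  qed
qed

lemma reach_all:
  assumes P: "is_partition L" and mu: "young mu = Mset L" and Q: "Q \<subseteq> Mset L"
    and Qc: "\<And>i j. (i,j) \<in> Q \<Longrightarrow> ((i,j+1) \<in> Mset L \<longrightarrow> (i,j+1) \<in> Q) \<and>
               ((i+1,j) \<in> Mset L \<longrightarrow> (i+1,j) \<in> Q) \<and> ((i+1,j+1) \<in> Mset L \<longrightarrow> (i+1,j+1) \<in> Q)"
  shows "(Mset L - Q) \<union> shiftc ` Q \<in> excited L mu"
proof -
  have "upc Q Q" unfolding upc_def by blast
  then show ?thesis using reach[OF P mu Q Qc, of "card Q"] by blast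
qed


definition NN' :: "nat list \<Rightarrow> nat list \<Rightarrow> nat \<Rightarrow> nat \<Rightarrow> nat" where
  "NN' L mu s j = (\<Sum>D \<in> {D \<in> excited L mu. card {c \<in> D. fst c = 1} = s - j}.
                     \<Prod>c \<in> {c \<in> D. fst c \<noteq> 1}. hook L c)"

lemma NN_coeff_NN': "NN_coeff I j = NN' (lamI I) (muI I) (sI I) j"
  unfolding NN_coeff_def NN'_def by simp

lemma interval_set:
  assumes "finite S" "\<forall>x\<in>S. 1 \<le> x" "\<forall>x\<in>S. \<forall>y. 1 \<le> y \<and> y \<le> x \<longrightarrow> y \<in> S"
  shows "S = {1..card S}"
proof (cases "S = {}")
  case False
  define m where "m = Max S"
  have mS: "m \<in> S" unfolding m_def using assms(1) False by simp
  have "S = {1..m}"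
  proof
    show "S \<subseteq> {1..m}" using assms(1,2) unfolding m_def by auto
    show "{1..m} \<subseteq> S" using assms(3) mS by auto
  qed
  then show ?thesis by simp
qed simp

lemma col_interval:
  assumes P: "is_partition L"
  shows "{i. (i,j) \<in> young L} = {1..conj_part L j}"
proof -
  have "{i. (i,j) \<in> young L} \<subseteq> fst ` young L"
  proof
    fix i assume "i \<in> {i. (i,j) \<in> young L}"
    then show "i \<in> fst ` young L" by (intro image_eqI[of _ fst "(i,j)"]) auto
  qed
  then have fin: "finite {i. (i,j) \<in> young L}" using finite_surj[OF young_finite[of L]] by blast
  show ?thesis unfolding conj_part_def
    by (rule interval_set[OF fin]) (auto dest: young_pos intro: young_down[OF P])
qed

lemma row_interval:
  "{j. (i,j) \<in> young L} = (if 1 \<le> i then {1..part L i} else {})"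
  unfolding young_part by auto

lemma wI_char:
  assumes P: "is_partition L" and P12: "part L 1 = part L 2" and p1: "1 \<le> part L 1"
  defines "w \<equiv> card {j. 1 \<le> j \<and> j \<le> (part L 1 - 1) + 1 \<and> conj_part L j = 2}"
  shows "(3,2) \<in> young L \<Longrightarrow> w < part L 1 - 1"
    and "(3,2) \<notin> young L \<Longrightarrow> part L 1 - 1 \<le> w"
proof -
  define p where "p = part L 1"
  have W: "{j. 1 \<le> j \<and> j \<le> (part L 1 - 1) + 1 \<and> conj_part L j = 2} = {j. 1 \<le> j \<and> j \<le> p \<and> conj_part L j = 2}"
    using p1 unfolding p_def by auto
  {
    assume a: "(3,2) \<in> young L"
    have "conj_part L j \<noteq> 2" if "j \<le> 2" "1 \<le> j" for j
    proof -
      have "(3,j) \<in> young L" using young_down[OF P a, of 3 j] that by auto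
      then have "3 \<in> {1..conj_part L j}" using col_interval[OF P, of j] by auto
      then show ?thesis by auto
    qed
    then have sub: "{j. 1 \<le> j \<and> j \<le> p \<and> conj_part L j = 2} \<subseteq> {3..p}"
    proof (intro subsetI)
      fix x assume x: "x \<in> {j. 1 \<le> j \<and> j \<le> p \<and> conj_part L j = 2}"
      have "\<not> x \<le> 2"
      proof
        assume "x \<le> 2" then show False using x \<open>\<And>j. j \<le> 2 \<Longrightarrow> 1 \<le> j \<Longrightarrow> conj_part L j \<noteq> 2\<close> by auto
      qed
      then show "x \<in> {3..p}" using x by auto
    qed
    have "(1,2) \<in> young L" using young_down[OF P a, of 1 2] by auto
    then have "2 \<le> p" unfolding young_part p_def by auto
    have "w \<le> card {3..p}" unfolding w_def W using sub by (intro card_mono) auto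
    then show "w < part L 1 - 1" using \<open>2 \<le> p\<close> unfolding p_def by auto
  }
  {
    assume a: "(3,2) \<notin> young L"
    have "conj_part L j = 2" if "2 \<le> j" "j \<le> p" for j
    proof -
      have "(2,j) \<in> young L" using that P12 unfolding young_part p_def by auto
      moreover have "(3,j) \<notin> young L" using young_down[OF P _, of 3 j 3 2] a that by auto
      ultimately have "2 \<in> {1..conj_part L j}" "3 \<notin> {1..conj_part L j}" using col_interval[OF P, of j] by auto
      then show ?thesis by auto
    qed
    then have "{2..p} \<subseteq> {j. 1 \<le> j \<and> j \<le> p \<and> conj_part L j = 2}" by auto
    then have "card {2..p} \<le> w" unfolding w_def W by (intro card_mono) auto
    then show "part L 1 - 1 \<le> w" unfolding p_def by auto
  }
qed


definition Esh :: "nat \<Rightarrow> nat \<Rightarrow> cell set" where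
  "Esh s r = {(a,b). (a = 1 \<and> 1 \<le> b \<and> b \<le> r) \<or> (a = 2 \<and> r+2 \<le> b \<and> b \<le> s+1)}"

lemma shallow_NN:
  assumes P: "is_partition L" and P12: "part L 1 = part L 2" and s1: "1 \<le> s" and ps: "part L 1 = s + 1"
    and n32: "(3,2) \<notin> young L" and mu: "young mu = Mset L" and j: "j \<le> s"
  shows "NN' L mu s j = fact j"
proof -
  have big: "(a,b) \<notin> young L" if "3 \<le> a" "2 \<le> b" for a b
    using young_down[OF P _, of a b 3 2] n32 that by auto
  have M: "Mset L = Esh s s"
  proof (rule set_eqI)
    fix x :: cell
    obtain a b where x: "x = (a,b)" by fastforce
    show "x \<in> Mset L \<longleftrightarrow> x \<in> Esh s s"
    proof (cases "a = 1")
      case True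
      then show ?thesis unfolding x Mset_def Esh_def young_part using P12 ps by (auto simp: numeral_2_eq_2)
    next
      case False
      then have "x \<notin> Mset L" unfolding x Mset_def using big[of "a+1" "b+1"] by auto
      moreover have "x \<notin> Esh s s" unfolding x Esh_def using False by auto
      ultimately show ?thesis by simp
    qed
  qed
  have sub: "D \<in> Esh s ` {0..s}" if "D \<in> excited L mu" for D
    using that
  proof (induction rule: excited.induct)
    case base then show ?case using mu M by auto
  next
    case (step D a b)
    then obtain r where r: "r \<le> s" "D = Esh s r" by auto
    have a1: "a = 1"
    proof (rule ccontr)
      assume "a \<noteq> 1"
      then have "a = 2" "r + 2 \<le> b" using step.hyps(2) r unfolding Esh_def by auto
      then show False using step.hyps(3) big[of "a+1" "b+1"] by auto
    qed
    then have b: "1 \<le> b" "b \<le> r" using step.hyps(2) r unfolding Esh_def by auto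
    have "b = r"
    proof (rule ccontr)
      assume "b \<noteq> r"
      then have "(a, b+1) \<in> D" using b a1 r unfolding Esh_def by auto
      then show False using step.hyps(4) by auto
    qed
    have "insert (a+1,b+1) (D - {(a,b)}) = Esh s (r-1)"
      unfolding r(2) a1 \<open>b = r\<close> Esh_def using b \<open>b = r\<close> r(1) by auto
    then show ?case using r by auto
  qed
  have ex: "Esh s (s - d) \<in> excited L mu" if "d \<le> s" for d
    using that
  proof (induction d)
    case 0 then show ?case using excited.base[of mu L] mu M by simp
  next
    case (Suc d)
    define r where "r = s - d"
    have r1: "1 \<le> r" "r \<le> s" using Suc.prems unfolding r_def by auto
    have D: "Esh s r \<in> excited L mu" using Suc unfolding r_def by auto
    have "insert (1+1,r+1) (Esh s r - {(1,r)}) \<in> excited L mu"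
    proof (rule excited.step[OF D])
      show "(1, r) \<in> Esh s r" using r1 unfolding Esh_def by auto
      show "(1 + 1, r + 1) \<in> young L" using r1 P12 ps unfolding young_part by (auto simp: numeral_2_eq_2)
      show "(1, r + 1) \<notin> Esh s r" unfolding Esh_def by auto
      show "(1 + 1, r) \<notin> Esh s r" unfolding Esh_def by auto
      show "(1 + 1, r + 1) \<notin> Esh s r" unfolding Esh_def by auto
    qed
    moreover have "insert (1+1,r+1) (Esh s r - {(1,r)}) = Esh s (s - Suc d)"
      using r1 unfolding Esh_def r_def by auto
    ultimately show ?case by simp
  qed
  have row1: "{c \<in> Esh s r. fst c = 1} = (\<lambda>x. (1,x)) ` {1..r}" for r
    unfolding Esh_def by (auto simp: image_iff)
  have crow1: "card {c \<in> Esh s r. fst c = 1} = r" for r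
    unfolding row1 by (subst card_image) (auto simp: inj_on_def)
  have cls: "{D \<in> excited L mu. card {c \<in> D. fst c = 1} = s - j} = {Esh s (s - j)}"
  proof
    show "{D \<in> excited L mu. card {c \<in> D. fst c = 1} = s - j} \<subseteq> {Esh s (s - j)}"
      using sub crow1 by fastforce
    show "{Esh s (s - j)} \<subseteq> {D \<in> excited L mu. card {c \<in> D. fst c = 1} = s - j}"
      using ex[of j] j crow1 by auto
  qed
  have row2: "{c \<in> Esh s (s-j). fst c \<noteq> 1} = (\<lambda>x. (2,x)) ` {s-j+2..s+1}"
    unfolding Esh_def by (auto simp: image_iff)
  have hk: "hook L (2,x) = s + 2 - x" if "2 \<le> x" "x \<le> s+1" for x
  proof -
    have h1: "{j'. (2, j') \<in> young L \<and> x \<le> j'} = {x..s+1}"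
      using that P12 ps unfolding young_part by auto
    have h2: "{i'. (i', x) \<in> young L \<and> 2 < i'} = {}" using big that by auto
    have c1: "card {j'. (2, j') \<in> young L \<and> x \<le> j'} = s + 2 - x" unfolding h1 by simp
    have c2: "card {i'. (i', x) \<in> young L \<and> 2 < i'} = 0" unfolding h2 by simp
    show ?thesis unfolding hook_def fst_conv snd_conv c1 c2 by simp
  qed
  have "NN' L mu s j = (\<Prod>c \<in> {c \<in> Esh s (s-j). fst c \<noteq> 1}. hook L c)"
    unfolding NN'_def cls by simp
  also have "\<dots> = (\<Prod>c \<in> (\<lambda>x. (2,x)) ` {s-j+2..s+1}. hook L c)"
    unfolding row2 ..
  also have "\<dots> = (\<Prod>x \<in> {s-j+2..s+1}. hook L (2,x))"
    by (subst prod.reindex) (auto simp: inj_on_def)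
  also have "\<dots> = (\<Prod>x \<in> {s-j+2..s+1}. s + 2 - x)"
    using hk j by (intro prod.cong) auto
  also have "\<dots> = fact j" using j
  proof (induction j)
    case 0 then show ?case by simp
  next
    case (Suc j)
    have e: "{s - Suc j + 2..s+1} = insert (s - j + 1) {s-j+2..s+1}" using Suc.prems by auto
    have "(\<Prod>x \<in> {s - Suc j + 2..s+1}. s + 2 - x) = (s + 2 - (s - j + 1)) * (\<Prod>x \<in> {s-j+2..s+1}. s + 2 - x)"
      unfolding e by (subst prod.insert) auto
    also have "\<dots> = Suc j * fact j" using Suc by auto
    finally show ?case by simp
  qed
  finally show ?thesis .
qed


lemma shift_mem: "x \<in> shiftc ` X \<longleftrightarrow> 1 \<le> fst x \<and> 1 \<le> snd x \<and> (fst x - 1, snd x - 1) \<in> X"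
proof
  assume "x \<in> shiftc ` X"
  then obtain y where "y \<in> X" "x = shiftc y" by blast
  then show "1 \<le> fst x \<and> 1 \<le> snd x \<and> (fst x - 1, snd x - 1) \<in> X"
    unfolding shiftc_def by auto
next
  assume a: "1 \<le> fst x \<and> 1 \<le> snd x \<and> (fst x - 1, snd x - 1) \<in> X"
  then have "x = shiftc (fst x - 1, snd x - 1)" unfolding shiftc_def by (cases x) auto
  then show "x \<in> shiftc ` X" using a by blast
qed

lemma hook_pos:
  assumes "(i,j) \<in> young L" shows "1 \<le> hook L (i,j)"
proof -
  have "finite {j'. (i, j') \<in> young L \<and> j \<le> j'}"
  proof -
    have "{j'. (i, j') \<in> young L \<and> j \<le> j'} \<subseteq> snd ` young L" by force
    then show ?thesis using finite_surj[OF young_finite[of L]] by blast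
  qed
  moreover have "j \<in> {j'. (i, j') \<in> young L \<and> j \<le> j'}" using assms by auto
  ultimately have "1 \<le> card {j'. (i, j') \<in> young L \<and> j \<le> j'}"
    using card_0_eq[of "{j'. (i, j') \<in> young L \<and> j \<le> j'}"] by fastforce
  then show ?thesis unfolding hook_def by simp
qed

lemma hook_strict:
  assumes P: "is_partition L" and Y: "(i+1,2) \<in> young L" and i: "1 \<le> i"
  shows "hook L (i+1,2) < hook L (i,1)"
proof -
  have finr: "finite {j'. (r, j') \<in> young L \<and> P j'}" for r P
  proof -
    have "{j'. (r, j') \<in> young L \<and> P j'} \<subseteq> snd ` young L" by force
    then show ?thesis using finite_surj[OF young_finite[of L]] by blast
  qed
  have finc: "finite {i'. (i', r) \<in> young L \<and> P i'}" for r P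
  proof -
    have "{i'. (i', r) \<in> young L \<and> P i'} \<subseteq> fst ` young L" by force
    then show ?thesis using finite_surj[OF young_finite[of L]] by blast
  qed
  have s1: "{j'. (i+1, j') \<in> young L \<and> 2 \<le> j'} \<subset> {j'. (i, j') \<in> young L \<and> 1 \<le> j'}"
  proof
    show "{j'. (i+1, j') \<in> young L \<and> 2 \<le> j'} \<subseteq> {j'. (i, j') \<in> young L \<and> 1 \<le> j'}"
      using young_down[OF P, of "i+1" _ i] i by auto
    have "(i,1) \<in> young L" using young_down[OF P Y, of i 1] i by auto
    then have "1 \<in> {j'. (i, j') \<in> young L \<and> 1 \<le> j'}" "1 \<notin> {j'. (i+1, j') \<in> young L \<and> 2 \<le> j'}"
      by auto
    then show "{j'. (i+1, j') \<in> young L \<and> 2 \<le> j'} \<noteq> {j'. (i, j') \<in> young L \<and> 1 \<le> j'}" by blast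
  qed
  have s2: "{i'. (i', 2) \<in> young L \<and> i+1 < i'} \<subseteq> {i'. (i', 1) \<in> young L \<and> i < i'}"
    using young_down[OF P, of _ 2 _ 1] by auto
  have "card {j'. (i+1, j') \<in> young L \<and> 2 \<le> j'} < card {j'. (i, j') \<in> young L \<and> 1 \<le> j'}"
    by (rule psubset_card_mono[OF finr s1])
  moreover have "card {i'. (i', 2) \<in> young L \<and> i+1 < i'} \<le> card {i'. (i', 1) \<in> young L \<and> i < i'}"
    by (rule card_mono[OF finc s2])
  ultimately show ?thesis unfolding hook_def by simp
qed

lemma deep_NN:
  assumes P: "is_partition L" and P12: "part L 1 = part L 2" and s1: "1 \<le> s" and ps: "part L 1 = s + 1"
    and y32: "(3,2) \<in> young L" and mu: "young mu = Mset L"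
  shows "NN' L mu s s < s * NN' L mu s (s - 1)"
proof -
  define a where "a = conj_part L 2"
  define m where "m = a - 1"
  have col2: "{i. (i,2) \<in> young L} = {1..a}" using col_interval[OF P, of 2] unfolding a_def .
  have a3: "3 \<le> a" using col2 y32 by auto
  have colM: "(i,1) \<in> Mset L \<longleftrightarrow> 1 \<le> i \<and> i \<le> m" for i
  proof -
    have "(i+1,2) \<in> young L \<longleftrightarrow> i + 1 \<in> {1..a}" using col2 by blast
    then show ?thesis unfolding Mset_def m_def using a3 by (auto simp: numeral_2_eq_2)
  qed
  have memM: "(i,j) \<in> Mset L \<longleftrightarrow> 1 \<le> i \<and> 1 \<le> j \<and> (i+1,j+1) \<in> young L" for i j
    unfolding Mset_def by simp
  define t where "t = (\<lambda>D. \<Prod>c \<in> {c \<in> D. fst c \<noteq> 1}. hook L c)"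
  define Fs where "Fs = {(i,j). 2 \<le> i \<and> 2 \<le> j \<and> (i,j) \<in> young L}"
  define Dk where "Dk = (\<lambda>k. {(i,j). (j = 1 \<and> 1 \<le> i \<and> i \<le> k) \<or>
                         (2 \<le> i \<and> 2 \<le> j \<and> (i,j) \<in> young L \<and> \<not> (j = 2 \<and> i \<le> k+1))})"
  have finY: "finite (young L)" by (rule young_finite)
  have Fs_sub: "Fs \<subseteq> young L" unfolding Fs_def by auto
  have Dk_sub: "Dk k \<subseteq> young L" if "k \<le> m" for k
  proof
    fix x assume "x \<in> Dk k"
    then obtain i j where x: "x = (i,j)" and h: "(j = 1 \<and> 1 \<le> i \<and> i \<le> k) \<or>
                         (2 \<le> i \<and> 2 \<le> j \<and> (i,j) \<in> young L \<and> \<not> (j = 2 \<and> i \<le> k+1))"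
      unfolding Dk_def by auto
    show "x \<in> young L"
    proof (cases "j = 1 \<and> 1 \<le> i \<and> i \<le> k")
      case True
      then have "(i,1) \<in> Mset L" using colM that by auto
      then show ?thesis using Mset_sub[OF P] x True by auto
    qed (use h x in auto)
  qed
  \<comment> \<open>The unique diagram with empty first row\<close>
  have FsM: "Fs = shiftc ` Mset L"
  proof (rule set_eqI)
    fix x :: cell
    obtain i j where x: "x = (i,j)" by fastforce
    show "x \<in> Fs \<longleftrightarrow> x \<in> shiftc ` Mset L"
      unfolding x shift_mem memM Fs_def by (cases i; cases j) auto
  qed
  have cardF: "card Fs = card (Mset L)"
    unfolding FsM by (rule card_image) (auto simp: inj_on_def shiftc_def prod_eq_iff)
  have clsS: "{D \<in> excited L mu. card {c \<in> D. fst c = 1} = s - s} \<subseteq> {Fs}"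
  proof
    fix D assume D: "D \<in> {D \<in> excited L mu. card {c \<in> D. fst c = 1} = s - s}"
    note inv = exc_inv[OF _ mu P, of D]
    have DY: "D \<subseteq> young L" and fD: "finite D" and cD: "card D = card (Mset L)"
      and pre: "\<forall>i. 1 \<le> i \<longrightarrow> (i+1,1) \<in> D \<longrightarrow> (i,1) \<in> D" using inv D by auto
    have "finite {c \<in> D. fst c = 1}" using fD by simp
    then have no1: "{c \<in> D. fst c = 1} = {}" using D by simp
    have nocol: "(i,1) \<notin> D" if "1 \<le> i" for i
      using that
    proof (induction i rule: dec_induct)
      case base then show ?case using no1 by auto
    next
      case (step n) then show ?case using pre by auto
    qed
    have "D \<subseteq> Fs"
    proof
      fix x assume xD: "x \<in> D"
      obtain i j where x: "x = (i,j)" by fastforce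
      have "(i,j) \<in> young L" using xD x DY by auto
      then have "1 \<le> i" "1 \<le> j" using young_pos by auto
      moreover have "i \<noteq> 1" using no1 xD x by auto
      moreover have "j \<noteq> 1" using nocol[of i] xD x \<open>1 \<le> i\<close> by auto
      ultimately show "x \<in> Fs" unfolding Fs_def using \<open>(i,j) \<in> young L\<close> x by auto
    qed
    moreover have "finite Fs" using finite_subset[OF Fs_sub finY] .
    ultimately have "D = Fs" using cD cardF by (intro card_subset_eq) auto
    then show "D \<in> {Fs}" by simp
  qed
  have finE: "finite (excited L mu)"
  proof -
    have "excited L mu \<subseteq> Pow (young L)" using exc_inv[OF _ mu P] by auto
    then show ?thesis using finY by (simp add: finite_subset)
  qed
  have NS: "NN' L mu s s \<le> t Fs"
  proof -
    have "NN' L mu s s = sum t {D \<in> excited L mu. card {c \<in> D. fst c = 1} = s - s}"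
      unfolding NN'_def t_def by simp
    also have "\<dots> \<le> sum t {Fs}" by (rule sum_mono2[OF _ clsS]) auto
    finally show ?thesis by simp
  qed
  define Sk where "Sk = (\<lambda>k. {(i,j). j = (1::nat) \<and> 1 \<le> i \<and> i \<le> (k::nat)})"
  have Dk_exc: "Dk k \<in> excited L mu" if k: "1 \<le> k" "k \<le> m" for k
  proof -
    define Q where "Q = Mset L - Sk k"
    have SkM: "Sk k \<subseteq> Mset L"
    proof
      fix x assume "x \<in> Sk k"
      then obtain i where "x = (i,1)" "1 \<le> i" "i \<le> k" unfolding Sk_def by blast
      then show "x \<in> Mset L" using colM[of i] k by simp
    qed
    have QM: "Q \<subseteq> Mset L" unfolding Q_def by blast
    have "(Mset L - Q) \<union> shiftc ` Q \<in> excited L mu"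
    proof (rule reach_all[OF P mu QM])
      fix i j assume ij: "(i,j) \<in> Q"
      then have ijM: "(i,j) \<in> Mset L" and nS: "(i,j) \<notin> Sk k" unfolding Q_def by auto
      then have i1: "1 \<le> i" and j1: "1 \<le> j" unfolding Mset_def by auto
      have a1: "(i,j+1) \<notin> Sk k" using j1 unfolding Sk_def by simp
      have a2: "(i+1,j) \<notin> Sk k" using nS i1 j1 unfolding Sk_def by auto
      have a3: "(i+1,j+1) \<notin> Sk k" using j1 unfolding Sk_def by simp
      show "((i,j+1) \<in> Mset L \<longrightarrow> (i,j+1) \<in> Q) \<and>
               ((i+1,j) \<in> Mset L \<longrightarrow> (i+1,j) \<in> Q) \<and> ((i+1,j+1) \<in> Mset L \<longrightarrow> (i+1,j+1) \<in> Q)"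
        unfolding Q_def using a1 a2 a3 by blast
    qed
    moreover have "(Mset L - Q) \<union> shiftc ` Q = Dk k"
    proof (rule set_eqI)
      fix x :: cell
      obtain i j where x: "x = (i,j)" by fastforce
      have MQ: "Mset L - Q = Sk k" unfolding Q_def using SkM by blast
      have shQ: "(i,j) \<in> shiftc ` Q \<longleftrightarrow> 2 \<le> i \<and> 2 \<le> j \<and> (i,j) \<in> young L \<and> \<not> (j = 2 \<and> i \<le> k+1)"
      proof -
        have "(i,j) \<in> shiftc ` Q \<longleftrightarrow> 1 \<le> i \<and> 1 \<le> j \<and> (i - 1, j - 1) \<in> Mset L \<and> (i - 1, j - 1) \<notin> Sk k"
          unfolding shift_mem Q_def by simp
        also have "\<dots> \<longleftrightarrow> 2 \<le> i \<and> 2 \<le> j \<and> (i,j) \<in> young L \<and> \<not> (j = 2 \<and> i \<le> k+1)"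
        proof (cases "2 \<le> i \<and> 2 \<le> j")
          case True
          then have e: "(i - 1 + 1, j - 1 + 1) = (i,j)" by simp
          show ?thesis unfolding Mset_def Sk_def using True e by auto
        next
          case False
          then show ?thesis unfolding Mset_def by auto
        qed
        finally show ?thesis .
      qed
      show "x \<in> (Mset L - Q) \<union> shiftc ` Q \<longleftrightarrow> x \<in> Dk k"
        unfolding x Un_iff MQ shQ unfolding Sk_def Dk_def by simp
    qed
    ultimately show ?thesis by simp
  qed
  have row1: "{c \<in> Dk k. fst c = 1} = {(1,1)}" if "1 \<le> k" for k
    unfolding Dk_def using that by auto
  have injD: "inj_on Dk {1..m}"
  proof (rule inj_onI)
    fix k k' assume kk: "k \<in> {1..m}" "k' \<in> {1..m}" "Dk k = Dk k'"
    show "k = k'"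
    proof (rule ccontr)
      assume "k \<noteq> k'"
      then consider "k < k'" | "k' < k" by linarith
      then show False
      proof cases
        case 1
        have "(k',1) \<in> Dk k'" "(k',1) \<notin> Dk k" unfolding Dk_def using kk 1 by auto
        then show False using kk by simp
      next
        case 2
        have "(k,1) \<in> Dk k" "(k,1) \<notin> Dk k'" unfolding Dk_def using kk 2 by auto
        then show False using kk by simp
      qed
    qed
  qed
  have NS1: "(\<Sum>k\<in>{1..m}. t (Dk k)) \<le> NN' L mu s (s - 1)"
  proof -
    have sub: "Dk ` {1..m} \<subseteq> {D \<in> excited L mu. card {c \<in> D. fst c = 1} = s - (s - 1)}"
      using Dk_exc row1 s1 by auto
    have "(\<Sum>k\<in>{1..m}. t (Dk k)) = sum t (Dk ` {1..m})"
      by (rule sum.reindex[OF injD, symmetric, unfolded comp_def])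
    also have "\<dots> \<le> sum t {D \<in> excited L mu. card {c \<in> D. fst c = 1} = s - (s - 1)}"
      by (rule sum_mono2[OF _ sub]) (use finE in auto)
    also have "\<dots> = NN' L mu s (s - 1)" unfolding NN'_def t_def by simp
    finally show ?thesis .
  qed
  have tpos: "0 < (\<Prod>c \<in> X. hook L c)" if "X \<subseteq> young L" for X
  proof (cases "finite X")
    case True
    then show ?thesis using hook_pos that by (intro prod_pos) fastforce
  qed simp
  have y22: "(2,2) \<in> young L" using young_down[OF P y32, of 2 2] by auto
  have m2: "2 \<le> m" unfolding m_def using a3 by auto
  have tF: "t Fs = hook L (2,2) * t (Dk 1)"
  proof -
    have e1: "{c \<in> Fs. fst c \<noteq> 1} = Fs" unfolding Fs_def by auto
    have e2: "{c \<in> Dk 1. fst c \<noteq> 1} = Fs - {(2,2)}" unfolding Fs_def Dk_def by auto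
    have "finite Fs" using finite_subset[OF Fs_sub finY] .
    moreover have "(2,2) \<in> Fs" unfolding Fs_def using y22 by auto
    ultimately show ?thesis unfolding t_def e1 e2 by (rule prod.remove)
  qed
  have tstep: "t (Dk k) < t (Dk (k+1))" if k: "1 \<le> k" "k + 1 \<le> m" for k
  proof -
    define A where "A = {c \<in> Dk k. fst c \<noteq> 1} - {(k+2,2)}"
    have yk: "(k+2,2) \<in> young L" using colM[of "k+1"] k unfolding Mset_def by (auto simp: numeral_2_eq_2)
    have e1: "{c \<in> Dk k. fst c \<noteq> 1} = insert (k+2,2) A" unfolding A_def Dk_def using yk by auto
    have e2: "{c \<in> Dk (k+1). fst c \<noteq> 1} = insert (k+1,1) A" unfolding A_def Dk_def using k by auto
    have AY: "A \<subseteq> young L" unfolding A_def using Dk_sub[of k] k by auto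
    have fA: "finite A" using finite_subset[OF AY finY] .
    have n1: "(k+2,2) \<notin> A" "(k+1,1) \<notin> A" unfolding A_def Dk_def by auto
    have "t (Dk k) = hook L (k+2,2) * (\<Prod>c \<in> A. hook L c)"
      unfolding t_def e1 using fA n1 by simp
    moreover have "t (Dk (k+1)) = hook L (k+1,1) * (\<Prod>c \<in> A. hook L c)"
      unfolding t_def e2 using fA n1 by simp
    moreover have "hook L (k+1+1,2) < hook L (k+1,1)" by (rule hook_strict[OF P]) (use yk in auto)
    moreover have "0 < (\<Prod>c \<in> A. hook L c)" using tpos[OF AY] .
    ultimately show ?thesis by (simp add: numeral_2_eq_2)
  qed
  have tmono: "t (Dk 1) \<le> t (Dk k)" if "1 \<le> k" "k \<le> m" for k
    using that
  proof (induction k rule: dec_induct)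
    case base then show ?case by simp
  next
    case (step n) then show ?case using tstep[of n] by auto
  qed
  have t12: "t (Dk 1) < t (Dk 2)" using tstep[of 1] m2 by (simp add: numeral_2_eq_2)
  have h22: "hook L (2,2) = s + a - 2"
  proof -
    have "{j'. (2, j') \<in> young L \<and> 2 \<le> j'} = {2..s+1}" using P12 ps unfolding young_part by auto
    moreover have "{i'. (i', 2) \<in> young L \<and> 2 < i'} = {3..a}" using col2 by auto
    ultimately show ?thesis unfolding hook_def using a3 by simp
  qed
  have sm: "hook L (2,2) \<le> s * m"
  proof -
    have "a - 2 \<le> s * (a - 2)" using s1 by simp
    then have "s + (a - 2) \<le> s * (a - 2) + s" by simp
    also have "\<dots> = s * m"
    proof -
      have "m = Suc (a - 2)" unfolding m_def using a3 by arith
      then show ?thesis by simp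
    qed
    finally show ?thesis unfolding h22 using a3 by simp
  qed
  have sumlow: "t (Dk 2) + (m - 1) * t (Dk 1) \<le> (\<Sum>k\<in>{1..m}. t (Dk k))"
  proof -
    have "(\<Sum>k\<in>{1..m}. t (Dk k)) = t (Dk 2) + (\<Sum>k\<in>{1..m} - {2}. t (Dk k))"
      using m2 by (subst sum.remove[of _ 2]) auto
    moreover have "(\<Sum>k\<in>{1..m} - {2}. t (Dk 1)) \<le> (\<Sum>k\<in>{1..m} - {2}. t (Dk k))"
      using tmono by (intro sum_mono) auto
    moreover have "(\<Sum>k\<in>{1..m} - {2}. t (Dk 1)) = (m - 1) * t (Dk 1)"
    proof -
      have "card ({1..m} - {2::nat}) = m - 1" using m2 by (simp add: card_Diff_singleton)
      then show ?thesis by simp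
    qed
    ultimately show ?thesis by linarith
  qed
  have "m * t (Dk 1) < t (Dk 2) + (m - 1) * t (Dk 1)"
    using t12 m2 by (cases m) auto
  then have "s * (m * t (Dk 1)) < s * (\<Sum>k\<in>{1..m}. t (Dk k))"
    using sumlow s1 by (intro mult_strict_left_mono) auto
  moreover have "t Fs \<le> s * (m * t (Dk 1))" unfolding tF using sm
    by (simp add: mult.assoc[symmetric] mult_right_mono)
  moreover have "s * (\<Sum>k\<in>{1..m}. t (Dk k)) \<le> s * NN' L mu s (s - 1)" using NS1 by simp
  ultimately show ?thesis using NS by linarith
qed

lemma lam_basic:
  assumes "descent_set I"
  shows "is_partition (lamI I)" "part (lamI I) 1 = part (lamI I) 2"
    "2 \<le> length (lamI I)" "1 \<le> part (lamI I) 1"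
proof -
  have h: "is_partition (lamI I) \<and> part (lamI I) 1 = part (lamI I) 2 \<and> ribbon_of (outer (lamI I)) I"
    by (rule lamI_props[OF assms])
  then show "is_partition (lamI I)" "part (lamI I) 1 = part (lamI I) 2" by auto
  obtain n c where n: "1 \<le> n" and R: "outer (lamI I) = c ` {1..n}" and st: "steps c n"
    using h unfolding ribbon_of_alt by blast
  have P: "is_partition (lamI I)" and P12: "part (lamI I) 1 = part (lamI I) 2" using h by auto
  show "2 \<le> length (lamI I)" "1 \<le> part (lamI I) 1" using ribbon_ends(5,6)[OF P P12 n R st] by auto
qed

theorem corollary4p7:
  fixes I :: "nat set"
  assumes "descent_set I"
  shows "(\<forall>j \<le> sI I. real (NN_coeff I j) / fact j = real (NN_coeff I 0) / fact 0)
           \<longleftrightarrow> shallow I"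
proof -
  define L where "L = lamI I"
  define mu where "mu = muI I"
  define s where "s = sI I"
  have P: "is_partition L" and P12: "part L 1 = part L 2" and p1: "1 \<le> part L 1"
    using lam_basic[OF assms] unfolding L_def by auto
  have mu: "young mu = Mset L" unfolding mu_def L_def by (rule muI_young[OF assms])
  have ps: "part L 1 = s + 1" unfolding s_def sI_def L_def[symmetric] using p1 by simp
  have C: "NN_coeff I j = NN' L mu s j" for j unfolding NN_coeff_NN' L_def mu_def s_def ..
  have W: "wI I = card {j. 1 \<le> j \<and> j \<le> (part L 1 - 1) + 1 \<and> conj_part L j = 2}"
    unfolding wI_def L_def s_def sI_def ..
  have sh: "shallow I \<longleftrightarrow> \<not> wI I < s" unfolding shallow_def deep_def s_def ..
  show ?thesis
  proof (cases "s = 0")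
    case True
    then show ?thesis unfolding sh s_def[symmetric] by auto
  next
    case False
    then have s1: "1 \<le> s" by simp
    show ?thesis
    proof (cases "(3,2) \<in> young L")
      case False
      have "s \<le> wI I" using wI_char(2)[OF P P12 p1 False] ps W by simp
      then have "shallow I" unfolding sh by simp
      moreover have "NN_coeff I j = fact j" if "j \<le> s" for j
        unfolding C by (rule shallow_NN[OF P P12 s1 ps False mu that])
      ultimately show ?thesis unfolding s_def[symmetric] by simp
    next
      case True
      have "wI I < s" using wI_char(1)[OF P P12 p1 True] ps W by simp
      then have ns: "\<not> shallow I" unfolding sh by simp
      have lt: "NN' L mu s s < s * NN' L mu s (s - 1)" by (rule deep_NN[OF P P12 s1 ps True mu])
      have "\<not> (\<forall>j \<le> s. real (NN_coeff I j) / fact j = real (NN_coeff I 0) / fact 0)"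
      proof
        assume a: "\<forall>j \<le> s. real (NN_coeff I j) / fact j = real (NN_coeff I 0) / fact 0"
        have e: "real (NN' L mu s s) / fact s = real (NN' L mu s (s-1)) / fact (s-1)"
          using a[rule_format, of s] a[rule_format, of "s-1"] unfolding C by simp
        have f: "(fact s :: real) = real s * fact (s-1)" using fact_reduce[of s] s1 by simp
        have "real (NN' L mu s s) = real s * real (NN' L mu s (s-1))"
          using e s1 unfolding f by (simp add: field_simps)
        then have "NN' L mu s s = s * NN' L mu s (s-1)" by (simp add: of_nat_mult[symmetric] del: of_nat_mult)
        then show False using lt by simp
      qed
      then show ?thesis using ns unfolding s_def[symmetric] by simp
    qed
  qed
qed


end
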